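(* Fix $k\ge1$. Let $\mathcal T_k$ be the set of self-avoiding walks on $\mathbb Z^2$ (including the empty walk) with North, East and South unit steps, starting at $(0,0)$ and confined to the strip $0\le y\le k$. For $w\in\mathcal T_k$ let $h(w)$ (resp. $h_c(w)$) be the number of horizontal steps at height different from $0$ and $k$ (resp. at height $0$ or $k$), and $v(w)$ (resp. $v_c(w)$) the number of vertical steps ending at height different from $0$ and $k$ (resp. ending at height $0$ or $k$). Let $$T_k(1)=\sum_{w\in\mathcal T_k}x^{h(w)}y^{v(w)}a^{h_c(w)}b^{v_c(w)}.$$ Then $T_k(1)=N_k/G_k$, where $N_k$, $G_k$ are defined by the recurrence $N_k=(1-x+y^2(1+x))N_{k-2}-y^2N_{k-4}$ (and the same recurrence for $G_k$) with initial conditions $N_{-1}=(1-x-xy)(b-y)/y^2$, $N_0=(b-xb+xy)/y$, $N_1=1+b$, $N_2=1-x+y+by(1+x)$, $G_0=(x-1)ab/y-(x+1)(a-1)$, $G_1=1-a-ab$, $G_2=(1-x)(1-a)-(x+1)yab$, $G_3=(1-x-xy)(1-a)-yab(x+y+xy)$; for $k\ge1$, $N_k$ and $G_k$ are polynomials in $x,y,a,b$. Equivalently, $$T_k(1)=\frac1{P(1/S)S^k+P(S)}\left(Q(1/S)S^k+Q(S)+(1-y^2)\frac{S^k-S}{S-1}\right),$$ where $S$ is the only power series in $x$ and $y$ satisfying $S+\frac1S=(1+x)y+(1-x)/y$, and $P(s)=1-a+aby-s(ab+y-ay)$, $Q(s)=1-by+(b-y)s$. *)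

theory Defs
  imports "HOL-Analysis.Analysis"
begin

datatype step = North | East | South

fun move :: "step \<Rightarrow> int \<times> int \<Rightarrow> int \<times> int" where
  "move North (i, j) = (i, j + 1)"
| "move East (i, j) = (i + 1, j)"
| "move South (i, j) = (i, j - 1)"

fun pts :: "int \<times> int \<Rightarrow> step list \<Rightarrow> (int \<times> int) list" where
  "pts p [] = [p]"
| "pts p (s # ws) = p # pts (move s p) ws"

definition walks :: "nat \<Rightarrow> step list set" where
  "walks k = {w. distinct (pts (0, 0) w) \<and>
                 (\<forall>q \<in> set (pts (0, 0) w). 0 \<le> snd q \<and> snd q \<le> int k)}"

definition steps_at :: "step list \<Rightarrow> (step \<times> (int \<times> int)) list" where
  "steps_at w = zip w (pts (0, 0) w)"

definition boundary :: "nat \<Rightarrow> int \<Rightarrow> bool" where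
  "boundary k j \<longleftrightarrow> j = 0 \<or> j = int k"

definition hstat :: "nat \<Rightarrow> step list \<Rightarrow> nat" where
  "hstat k w = length (filter (\<lambda>(s, p). s = East \<and> \<not> boundary k (snd p)) (steps_at w))"

definition hcstat :: "nat \<Rightarrow> step list \<Rightarrow> nat" where
  "hcstat k w = length (filter (\<lambda>(s, p). s = East \<and> boundary k (snd p)) (steps_at w))"

definition vstat :: "nat \<Rightarrow> step list \<Rightarrow> nat" where
  "vstat k w = length (filter (\<lambda>(s, p). s \<noteq> East \<and> \<not> boundary k (snd (move s p))) (steps_at w))"

definition vcstat :: "nat \<Rightarrow> step list \<Rightarrow> nat" where
  "vcstat k w = length (filter (\<lambda>(s, p). s \<noteq> East \<and> boundary k (snd (move s p))) (steps_at w))"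

text \<open>NN n = N_(n-1)  (index shifted by one so that N_(-1) is NN 0).\<close>
fun NN :: "real \<Rightarrow> real \<Rightarrow> real \<Rightarrow> real \<Rightarrow> nat \<Rightarrow> real" where
  "NN x y a b 0 = (1 - x - x*y) * (b - y) / y^2"
| "NN x y a b (Suc 0) = (b - x*b + x*y) / y"
| "NN x y a b (Suc (Suc 0)) = 1 + b"
| "NN x y a b (Suc (Suc (Suc 0))) = 1 - x + y + b*y*(1 + x)"
| "NN x y a b (Suc (Suc (Suc (Suc n)))) =
     (1 - x + y^2 * (1 + x)) * NN x y a b (Suc (Suc n)) - y^2 * NN x y a b n"

definition Nk :: "real \<Rightarrow> real \<Rightarrow> real \<Rightarrow> real \<Rightarrow> nat \<Rightarrow> real" where
  "Nk x y a b k = NN x y a b (Suc k)"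

fun Gk :: "real \<Rightarrow> real \<Rightarrow> real \<Rightarrow> real \<Rightarrow> nat \<Rightarrow> real" where
  "Gk x y a b 0 = (x - 1) * a * b / y - (x + 1) * (a - 1)"
| "Gk x y a b (Suc 0) = 1 - a - a*b"
| "Gk x y a b (Suc (Suc 0)) = (1 - x) * (1 - a) - (x + 1) * y * a * b"
| "Gk x y a b (Suc (Suc (Suc 0))) = (1 - x - x*y) * (1 - a) - y*a*b*(x + y + x*y)"
| "Gk x y a b (Suc (Suc (Suc (Suc n)))) =
     (1 - x + y^2 * (1 + x)) * Gk x y a b (Suc (Suc n)) - y^2 * Gk x y a b n"

definition Ppol :: "real \<Rightarrow> real \<Rightarrow> real \<Rightarrow> real \<Rightarrow> real" where
  "Ppol y a b s = 1 - a + a*b*y - s * (a*b + y - a*y)"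

definition Qpol :: "real \<Rightarrow> real \<Rightarrow> real \<Rightarrow> real" where
  "Qpol y b s = 1 - b*y + (b - y) * s"

end

theory Submission
  imports Defs
begin



lemma pts_shift: "pts (i + d, j) w = map (\<lambda>q. (fst q + d, snd q)) (pts (i, j) w)"
proof (induction w arbitrary: i j)
  case Nil then show ?case by simp
next
  case (Cons s w)
  show ?case
  proof (cases s)
    case North then show ?thesis using Cons.IH[of i "j+1"] by simp
  next
    case East then show ?thesis using Cons.IH[of "i+1" j] by (simp add: ac_simps)
  next
    case South then show ?thesis using Cons.IH[of i "j-1"] by simp
  qed
qed

lemma pts_fst_ge: "q \<in> set (pts p w) \<Longrightarrow> fst p \<le> fst q"
proof (induction w arbitrary: p)
  case Nil then show ?case by simp
next
  case (Cons s w)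
  obtain i j where p: "p = (i,j)" by force
  from Cons show ?case
    by (cases s) (auto simp: p dest!: Cons.IH)
qed

lemma pts_hd: "pts p w = p # tl (pts p w)"
  by (cases w) auto

lemma col_up:
  assumes "distinct (pts (i, j) w)" "\<And>w'. w \<noteq> South # w'"
    "q \<in> set (pts (i, j) w)" "fst q = i"
  shows "j \<le> snd q"
  using assms
proof (induction w arbitrary: j)
  case Nil then show ?case by simp
next
  case (Cons s w)
  show ?case
  proof (cases s)
    case North
    have d: "distinct (pts (i, j+1) w)" "(i,j) \<notin> set (pts (i, j+1) w)"
      using Cons.prems(1) North by auto
    have ns: "w \<noteq> South # w'" for w'
    proof
      assume "w = South # w'"
      then have "(i,j) \<in> set (pts (i, j+1) w)" by (cases w') auto
      with d show False by simp
    qed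
    show ?thesis
    proof (cases "q = (i,j)")
      case True then show ?thesis by simp
    next
      case False
      then have "q \<in> set (pts (i, j+1) w)" using Cons.prems(3) North by auto
      from Cons.IH[OF d(1) ns this Cons.prems(4)] show ?thesis by simp
    qed
  next
    case East
    then show ?thesis using Cons.prems pts_fst_ge[of q "(i+1,j)" w] by (auto simp: prod_eq_iff)
  next
    case South
    then show ?thesis using Cons.prems by auto
  qed
qed

lemma col_down:
  assumes "distinct (pts (i, j) w)" "\<And>w'. w \<noteq> North # w'"
    "q \<in> set (pts (i, j) w)" "fst q = i"
  shows "snd q \<le> j"
  using assms
proof (induction w arbitrary: j)
  case Nil then show ?case by simp
next
  case (Cons s w)
  show ?case
  proof (cases s)
    case South
    have d: "distinct (pts (i, j-1) w)" "(i,j) \<notin> set (pts (i, j-1) w)"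
      using Cons.prems(1) South by auto
    have ns: "w \<noteq> North # w'" for w'
    proof
      assume "w = North # w'"
      then have "(i,j) \<in> set (pts (i, j-1) w)" by (cases w') auto
      with d show False by simp
    qed
    show ?thesis
    proof (cases "q = (i,j)")
      case True then show ?thesis by simp
    next
      case False
      then have "q \<in> set (pts (i, j-1) w)" using Cons.prems(3) South by auto
      from Cons.IH[OF d(1) ns this Cons.prems(4)] show ?thesis by simp
    qed
  next
    case East
    then show ?thesis using Cons.prems pts_fst_ge[of q "(i+1,j)" w] by (auto simp: prod_eq_iff)
  next
    case North
    then show ?thesis using Cons.prems by auto
  qed
qed




definition wkj :: "nat \<Rightarrow> int \<Rightarrow> step list set" where
  "wkj k j = {w. distinct (pts (0, j) w) \<and> (\<forall>q \<in> set (pts (0, j) w). 0 \<le> snd q \<and> snd q \<le> int k)}"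

lemma walks_wkj: "walks k = wkj k 0"
  unfolding walks_def wkj_def by simp

lemma distinct_shift: "distinct (pts (1, j) w) \<longleftrightarrow> distinct (pts (0, j) w)"
proof -
  have "pts (0 + 1, j) w = map (\<lambda>q. (fst q + 1, snd q)) (pts (0, j) w)" by (rule pts_shift)
  moreover have "inj (\<lambda>q::int\<times>int. (fst q + 1, snd q))" by (auto simp: inj_def prod_eq_iff)
  ultimately show ?thesis by (simp add: distinct_map inj_on_subset[of _ UNIV])
qed

lemma snd_shift: "snd ` set (pts (1, j) w) = snd ` set (pts (0, j) w)"
proof -
  have "pts (0 + 1, j) w = map (\<lambda>q. (fst q + 1, snd q)) (pts (0, j) w)" by (rule pts_shift)
  then show ?thesis by (simp add: image_image)
qed

lemma wkj_Nil: "[] \<in> wkj k j \<longleftrightarrow> 0 \<le> j \<and> j \<le> int k"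
  by (simp add: wkj_def)

lemma wkj_range: "w \<in> wkj k j \<Longrightarrow> 0 \<le> j \<and> j \<le> int k"
  unfolding wkj_def using pts_hd[of "(0,j)" w] by (metis (no_types, lifting) list.set_intros(1) mem_Collect_eq snd_conv)

lemma wkj_East: "East # w \<in> wkj k j \<longleftrightarrow> w \<in> wkj k j"
proof -
  have nm: "(0,j) \<notin> set (pts (1,j) w)" using pts_fst_ge[of "(0,j)" "(1,j)" w] by auto
  have s: "(\<forall>q \<in> set (pts (1, j) w). 0 \<le> snd q \<and> snd q \<le> int k) \<longleftrightarrow>
           (\<forall>q \<in> set (pts (0, j) w). 0 \<le> snd q \<and> snd q \<le> int k)"
    using snd_shift[of j w] by (metis (no_types, lifting) image_iff)
  have h: "(0,j) \<in> set (pts (0,j) w)" using pts_hd[of "(0,j)" w] by (metis list.set_intros(1))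
  show ?thesis
    unfolding wkj_def using nm s distinct_shift[of j w] h by auto
qed

lemma wkj_North: "0 \<le> j \<Longrightarrow> North # w \<in> wkj k j \<longleftrightarrow> w \<in> wkj k (j+1) \<and> (\<forall>w'. w \<noteq> South # w')"
proof
  assume j: "0 \<le> j" and w: "North # w \<in> wkj k j"
  then have d: "distinct (pts (0, j+1) w)" "(0,j) \<notin> set (pts (0, j+1) w)" by (auto simp: wkj_def)
  have ns: "w \<noteq> South # w'" for w'
  proof
    assume "w = South # w'"
    then have "(0,j) \<in> set (pts (0, j+1) w)" by (cases w') auto
    with d show False by simp
  qed
  with w show "w \<in> wkj k (j+1) \<and> (\<forall>w'. w \<noteq> South # w')" by (auto simp: wkj_def)
next
  assume j: "0 \<le> j" and w: "w \<in> wkj k (j+1) \<and> (\<forall>w'. w \<noteq> South # w')"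
  then have "(0,j) \<notin> set (pts (0, j+1) w)"
    using col_up[of 0 "j+1" w "(0,j)"] by (auto simp: wkj_def)
  moreover have "j + 1 \<le> int k" using wkj_range[of w k "j+1"] w by auto
  ultimately show "North # w \<in> wkj k j" using w j by (auto simp: wkj_def)
qed

lemma wkj_South: "j \<le> int k \<Longrightarrow> South # w \<in> wkj k j \<longleftrightarrow> w \<in> wkj k (j-1) \<and> (\<forall>w'. w \<noteq> North # w')"
proof
  assume j: "j \<le> int k" and w: "South # w \<in> wkj k j"
  then have d: "distinct (pts (0, j-1) w)" "(0,j) \<notin> set (pts (0, j-1) w)" by (auto simp: wkj_def)
  have ns: "w \<noteq> North # w'" for w'
  proof
    assume "w = North # w'"
    then have "(0,j) \<in> set (pts (0, j-1) w)" by (cases w') auto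
    with d show False by simp
  qed
  with w show "w \<in> wkj k (j-1) \<and> (\<forall>w'. w \<noteq> North # w')" by (auto simp: wkj_def)
next
  assume j: "j \<le> int k" and w: "w \<in> wkj k (j-1) \<and> (\<forall>w'. w \<noteq> North # w')"
  then have "(0,j) \<notin> set (pts (0, j-1) w)"
    using col_down[of 0 "j-1" w "(0,j)"] by (auto simp: wkj_def)
  moreover have "0 \<le> j - 1" using wkj_range[of w k "j-1"] w by auto
  ultimately show "South # w \<in> wkj k j" using w j by (auto simp: wkj_def)
qed




fun wt :: "real \<Rightarrow> real \<Rightarrow> real \<Rightarrow> real \<Rightarrow> nat \<Rightarrow> int \<Rightarrow> step list \<Rightarrow> real" where
  "wt x y a b k j [] = 1"
| "wt x y a b k j (East # w) = (if boundary k j then a else x) * wt x y a b k j w"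
| "wt x y a b k j (North # w) = (if boundary k (j+1) then b else y) * wt x y a b k (j+1) w"
| "wt x y a b k j (South # w) = (if boundary k (j-1) then b else y) * wt x y a b k (j-1) w"

definition cnt :: "(step \<times> (int \<times> int) \<Rightarrow> bool) \<Rightarrow> int \<times> int \<Rightarrow> step list \<Rightarrow> nat" where
  "cnt P p w = length (filter P (zip w (pts p w)))"

lemma cnt_Nil[simp]: "cnt P p [] = 0" by (simp add: cnt_def)
lemma cnt_Cons[simp]: "cnt P p (s # w) = (if P (s, p) then Suc (cnt P (move s p) w) else cnt P (move s p) w)"
  by (simp add: cnt_def)

lemma wt_cnt:
  "x ^ cnt (\<lambda>(s, p). s = East \<and> \<not> boundary k (snd p)) p w
   * y ^ cnt (\<lambda>(s, p). s \<noteq> East \<and> \<not> boundary k (snd (move s p))) p w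
   * a ^ cnt (\<lambda>(s, p). s = East \<and> boundary k (snd p)) p w
   * b ^ cnt (\<lambda>(s, p). s \<noteq> East \<and> boundary k (snd (move s p))) p w
   = wt x y a b k (snd p) w"
proof (induction w arbitrary: p)
  case Nil then show ?case by simp
next
  case (Cons s w)
  obtain i j where p: "p = (i, j)" by force
  show ?case
  proof (cases s)
    case North then show ?thesis using Cons.IH[of "(i, j+1)"] by (simp add: p)
  next
    case East then show ?thesis using Cons.IH[of "(i+1, j)"] by (simp add: p)
  next
    case South then show ?thesis using Cons.IH[of "(i, j-1)"] by (simp add: p)
  qed
qed

lemma weight_wt: "x ^ hstat k w * y ^ vstat k w * a ^ hcstat k w * b ^ vcstat k w = wt x y a b k 0 w"
  using wt_cnt[of x k "(0,0)" w y a b]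
  by (simp add: hstat_def vstat_def hcstat_def vcstat_def steps_at_def cnt_def)

lemma wt_bound:
  assumes "\<bar>x\<bar> \<le> e" "\<bar>y\<bar> \<le> e" "\<bar>a\<bar> \<le> e" "\<bar>b\<bar> \<le> e"
  shows "\<bar>wt x y a b k j w\<bar> \<le> e ^ length w"
proof (induction w arbitrary: j)
  case Nil then show ?case by simp
next
  case (Cons s w)
  have e: "0 \<le> e" using assms by linarith
  have m: "\<bar>c * r\<bar> \<le> e * e ^ length w" if "\<bar>c\<bar> \<le> e" "\<bar>r\<bar> \<le> e ^ length w" for c r
    using that by (simp add: abs_mult mult_mono e)
  show ?case
    by (cases s) (auto intro!: m Cons.IH simp: assms)
qed




lemma UNIV_step: "(UNIV :: step set) = {North, East, South}"
  using step.exhaust by auto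

lemma card_len: "finite {w :: step list. length w = n}" "card {w :: step list. length w = n} = 3 ^ n"
proof -
  have f: "finite (UNIV :: step set)" by (simp add: UNIV_step)
  have c: "card (UNIV :: step set) = 3" by (simp add: UNIV_step)
  have e: "{w :: step list. length w = n} = {xs. set xs \<subseteq> UNIV \<and> length xs = n}" by simp
  show "finite {w :: step list. length w = n}" using finite_lists_length_eq[OF f] e by simp
  show "card {w :: step list. length w = n} = 3 ^ n" using card_lists_length_eq[OF f] e c by simp
qed

lemma finite_len_le: "finite {w :: step list. length w \<le> L}"
proof -
  have U: "{w :: step list. length w \<le> L} = (\<Union>n\<in>{..L}. {w. length w = n})" by auto
  show ?thesis unfolding U using card_len(1) by blast
qed

lemma sum_len_le:
  assumes e: "0 \<le> e" "3 * e < (1::real)"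
  shows "(\<Sum>w\<in>{w :: step list. length w \<le> L}. e ^ length w) \<le> 1 / (1 - 3 * e)"
proof -
  have U: "{w :: step list. length w \<le> L} = (\<Union>n\<in>{..L}. {w. length w = n})" by auto
  have "(\<Sum>w\<in>{w :: step list. length w \<le> L}. e ^ length w)
      = (\<Sum>n\<in>{..L}. (\<Sum>w\<in>{w :: step list. length w = n}. e ^ length w))"
    unfolding U by (rule sum.UNION_disjoint) (auto simp: card_len)
  also have "\<dots> = (\<Sum>n\<in>{..L}. (3 * e) ^ n)"
    by (simp add: card_len power_mult_distrib)
  also have "\<dots> = (\<Sum>n<Suc L. (3 * e) ^ n)" by (simp add: lessThan_Suc_atMost)
  also have "\<dots> = (1 - (3*e) ^ Suc L) / (1 - 3 * e)"
  proof -
    have ne: "3 * e \<noteq> 1" using e by simp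
    show ?thesis by (simp only: sum_gp_strict if_not_P[OF ne])
  qed
  also have "\<dots> \<le> 1 / (1 - 3 * e)" using e by (simp add: divide_right_mono)
  finally show ?thesis .
qed

lemma wt_abs_summable:
  assumes "\<bar>x\<bar> \<le> e" "\<bar>y\<bar> \<le> e" "\<bar>a\<bar> \<le> e" "\<bar>b\<bar> \<le> e" "3 * e < 1"
  shows "(wt x y a b k j) summable_on A"
proof -
  have e0: "0 \<le> e" using assms by linarith
  have "Infinite_Sum.abs_summable_on (wt x y a b k j) UNIV"
    unfolding abs_summable_iff_bdd_above
  proof (rule bdd_aboveI)
    fix s assume "s \<in> sum (\<lambda>w. norm (wt x y a b k j w)) ` {F. F \<subseteq> UNIV \<and> finite F}"
    then obtain F where F: "finite F" and s: "s = (\<Sum>w\<in>F. norm (wt x y a b k j w))" by auto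
    define L where "L = Max (length ` F)"
    have sub: "F \<subseteq> {w. length w \<le> L}"
      using F by (auto simp: L_def)
    have "s \<le> (\<Sum>w\<in>F. e ^ length w)"
      unfolding s by (rule sum_mono) (use wt_bound[OF assms(1-4)] in simp)
    also have "\<dots> \<le> (\<Sum>w\<in>{w :: step list. length w \<le> L}. e ^ length w)"
      by (rule sum_mono2) (use sub finite_len_le e0 in \<open>auto simp: finite_subset\<close>)
    also have "\<dots> \<le> 1 / (1 - 3 * e)" by (rule sum_len_le) (use assms e0 in auto)
    finally show "s \<le> 1 / (1 - 3 * e)" .
  qed
  then have "(wt x y a b k j) summable_on UNIV" by (rule abs_summable_summable)
  then show ?thesis by (rule summable_on_subset_banach) simp
qed



lemma final_identity:
  fixes S T y a b :: real
  assumes "S \<noteq> 0" "y \<noteq> 0" "S \<noteq> 1"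
  shows "(1 - a + a*b*y) * ((1 - b*y + (b - y) * (1/S)) * T + (1 - b*y + (b - y) * S) + (1 - y^2) * (T - S) / (S - 1))
    = (y*(S*(1-y^2)/(y*(S-1)^2)) + 1 - b*y) * (((1 - a + a*b*y) - (y + a*b - a*y)*S) + ((1 - a + a*b*y) - (y + a*b - a*y)/S)*T)
      + ((y + a*b - a*y)*(y*(S*(1-y^2)/(y*(S-1)^2))+1-b*y)+(1 - a + a*b*y)*(b-y-y*(S*(1-y^2)/(y*(S-1)^2)))) * (S + T/S)"
proof -
  have s1: "S - 1 \<noteq> 0" using assms by simp
  show ?thesis
    using assms s1
    by (simp add: field_simps) algebra
qed

lemma solve_sys:
  fixes S T y a b c A B X0 Xk :: real
  defines "a1 \<equiv> y + a*b - a*y" and "a2 \<equiv> 1 - a + a*b*y"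
  defines "p \<equiv> a2 - a1*S" and "q \<equiv> a2 - a1/S"
  assumes e1: "y*(c + A + B) = a1*X0 + (b-y)"
    and e2: "y*(c + A*S + B/S) = a2*X0 - (1-b*y)"
    and e3: "y*(c + A*T + B/T) = a1*Xk + (b-y)"
    and e4: "y*(c + A*T/S + B*S/T) = a2*Xk - (1-b*y)"
    and nz: "S \<noteq> 0" "T \<noteq> 0" "a2 \<noteq> 0" "p - q*T \<noteq> 0"
  defines "r \<equiv> a1*(y*c+1-b*y)+a2*(b-y-y*c)"
  shows "a2 * X0 * (p + q*T) = (y*c + 1 - b*y) * (p + q*T) + r * (S + T/S)"
proof -
  define uA where "uA = y*A"
  define wB where "wB = y*B"
  have I: "p*uA + q*wB = r"
  proof -
    have "a2 * (y*(c + A + B)) - a1 * (y*(c + A*S + B/S)) = a2*(a1*X0 + (b-y)) - a1*(a2*X0 - (1-b*y))"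
      using e1 e2 by simp
    then show ?thesis unfolding p_def q_def r_def uA_def wB_def using nz
      by (simp add: field_simps; (simp add: algebra_simps)?)
  qed
  have II': "q*T*T*uA + p*wB = r*T"
  proof -
    have h: "a2*(y*c + uA*T + wB/T) - a1*(y*c + uA*T/S + wB*S/T) - (a2*(b-y) + a1*(1-b*y)) = 0"
    proof -
      have "a2 * (y*(c + A*T + B/T)) - a1 * (y*(c + A*T/S + B*S/T)) = a2*(a1*Xk + (b-y)) - a1*(a2*Xk - (1-b*y))"
        using e3 e4 by simp
      then show ?thesis unfolding uA_def wB_def by (simp add: algebra_simps)
    qed
    have "q*T*T*uA + p*wB - r*T = T*(a2*(y*c + uA*T + wB/T) - a1*(y*c + uA*T/S + wB*S/T) - (a2*(b-y) + a1*(1-b*y)))"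
      unfolding p_def q_def r_def using nz by (simp add: field_simps)
    then show ?thesis using h by simp
  qed
  have "(p*uA + q*wB)*p - (q*T*T*uA + p*wB)*q = r*p - r*T*q" using I II' by simp
  then have "uA*(p - q*T)*(p + q*T) = r*(p - q*T)" by (simp add: algebra_simps)
  then have U: "uA*(p + q*T) = r" using nz by simp
  have "(q*T*T*uA + p*wB)*p - (p*uA + q*wB)*(q*T*T) = r*T*p - r*q*T*T" using I II' by simp
  then have "wB*(p - q*T)*(p + q*T) = r*T*(p - q*T)" by (simp add: algebra_simps)
  then have V: "wB*(p + q*T) = r*T" using nz by simp
  have X: "a2*X0 = y*c + uA*S + wB/S + (1 - b*y)" using e2 unfolding uA_def wB_def using nz
    by (simp add: field_simps)
  have "a2*X0*(p+q*T) = (y*c + (1 - b*y))*(p+q*T) + (uA*(p+q*T))*S + (wB*(p+q*T))/S"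
    unfolding X using nz by (simp add: field_simps)
  also have "\<dots> = (y*c + 1 - b*y) * (p + q*T) + r * (S + T/S)"
    unfolding U V using nz by (simp add: field_simps)
  finally show ?thesis .
qed


lemma rec_closed:
  fixes G :: "nat \<Rightarrow> real" and S y c \<mu> :: real
  assumes S0: "S \<noteq> 0" and S1: "S^2 \<noteq> 1" and mu: "\<mu> = y*(S+1/S)"
    and cdef: "c*(\<mu> - 2*y) = 1 - y^2"
    and rec: "\<And>j. j + 2 \<le> k \<Longrightarrow> y*G j - \<mu>*G (j+1) + y*G (j+2) = -(1-y^2)"
    and y0: "y \<noteq> 0"
  shows "\<exists>A B. \<forall>j\<le>k. G j = c + A*S^j + B/S^j"
proof -
  define A where "A = (S*(G 1 - c) - (G 0 - c))/(S^2-1)"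
  define B where "B = G 0 - c - A"
  define f where "f j = c + A*S^j + B/S^j" for j
  have s2: "S^2 - 1 \<noteq> 0" using S1 by simp
  have f0: "f 0 = G 0" by (simp add: f_def B_def)
  have Ae: "A*(S^2-1) = S*(G 1 - c) - (G 0 - c)" unfolding A_def using s2 by simp
  have "f 1 = c + (A*(S^2-1) + (G 0 - c))/S"
    unfolding f_def B_def using S0 by (simp add: field_simps power2_eq_square)
  also have "\<dots> = G 1" unfolding Ae using S0 by simp
  finally have f1: "f 1 = G 1" .
  have frec: "y*f j - \<mu>*f (j+1) + y*f (j+2) = -(1-y^2)" for j
  proof -
    have "y*f j - \<mu>*f (j+1) + y*f (j+2) = c*(2*y - \<mu>) + A*S^j*(y - \<mu>*S + y*S^2) + (B/S^j)*(y - \<mu>/S + y/S^2)"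
    proof -
      define Z where "Z = S^j"
      have Z0: "Z \<noteq> 0" using S0 by (simp add: Z_def)
      have p1: "S^(j+1) = Z*S" and p2: "S^(j+2) = Z*S*S" by (simp_all add: Z_def power_add power2_eq_square)
      show ?thesis unfolding f_def p1 p2 Z_def[symmetric] using S0 Z0
        by (simp add: field_simps power2_eq_square)
    qed
    also have "y - \<mu>*S + y*S^2 = 0" unfolding mu using S0 by (simp add: field_simps power2_eq_square)
    also have "y - \<mu>/S + y/S^2 = 0" unfolding mu using S0 by (simp add: field_simps power2_eq_square)
    finally show ?thesis using cdef by (simp add: algebra_simps)
  qed
  have main: "j + 1 \<le> k \<longrightarrow> G j = f j \<and> G (j+1) = f (j+1)" for j
  proof (induction j)
    case 0 then show ?case using f0 f1 by simp
  next
    case (Suc j)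
    show ?case
    proof
      assume jk: "Suc j + 1 \<le> k"
      then have h: "G j = f j" "G (j+1) = f (j+1)" using Suc by auto
      have "y*G (j+2) = -(1-y^2) - y*G j + \<mu>*G (j+1)" using rec[of j] jk by simp
      also have "\<dots> = y*f (j+2)" using frec[of j] h by simp
      finally have "G (j+2) = f (j+2)" using y0 by simp
      then show "G (Suc j) = f (Suc j) \<and> G (Suc j + 1) = f (Suc j + 1)" using h by simp
    qed
  qed
  have "\<forall>j\<le>k. G j = f j"
  proof (intro allI impI)
    fix j assume "j \<le> k"
    then show "G j = f j"
      using main[of j] main[of "j-1"] f0 by (cases j) auto
  qed
  then show ?thesis unfolding f_def by blast
qed

lemma par_rec:
  fixes L :: "nat \<Rightarrow> real"
  assumes rec: "\<And>n. L (n+2) = y*(S+1/S)*L (n+1) - y^2*L n"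
    and S0: "S \<noteq> 0"
    and b0: "L 0 = \<alpha> + \<beta>" and b1: "L 1 * S = y*(\<alpha>*S^2 + \<beta>)"
  shows "L n * S^n = y^n*(\<alpha>*S^(2*n) + \<beta>)"
proof (induction n rule: less_induct)
  case (less n)
  show ?case
  proof (cases n)
    case 0 then show ?thesis using b0 by simp
  next
    case (Suc n1)
    show ?thesis
    proof (cases n1)
      case 0 then show ?thesis using b1 Suc by simp
    next
      case (Suc n2)
      have n: "n = n2 + 2" using Suc \<open>n = Suc n1\<close> by simp
      have I1: "L (n2+1) * S^(n2+1) = y^(n2+1)*(\<alpha>*S^(2*(n2+1)) + \<beta>)" using less[of "n2+1"] n by simp
      have I0: "L n2 * S^n2 = y^n2*(\<alpha>*S^(2*n2) + \<beta>)" using less[of n2] n by simp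
      have "L n * S^n = y*(S+1/S)*S * (L (n2+1) * S^(n2+1)) - y^2*S^2*(L n2 * S^n2)"
        unfolding n rec using S0 by (simp add: field_simps power_add power2_eq_square)
      also have "\<dots> = y*(S+1/S)*S * (y^(n2+1)*(\<alpha>*S^(2*(n2+1)) + \<beta>)) - y^2*S^2*(y^n2*(\<alpha>*S^(2*n2) + \<beta>))"
        unfolding I1 I0 ..
      also have "\<dots> = y^n*(\<alpha>*S^(2*n) + \<beta>)"
        unfolding n using S0 by (simp add: field_simps power_add power2_eq_square power_mult)
      finally show ?thesis .
    qed
  qed
qed


lemma x_eq:
  fixes x y S :: real
  assumes "S \<noteq> 0" "y \<noteq> 0" "y^2 \<noteq> 1" "S + 1/S = (1+x)*y + (1-x)/y"
  shows "x = (S*y-1)*(S-y)/(S*(y^2-1))"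
proof -
  have d: "S*(y^2-1) \<noteq> 0" using assms by simp
  have "S*y*(S + 1/S) = S*y*((1+x)*y + (1-x)/y)" using assms(4) by simp
  then have "S^2*y + y = (1+x)*y^2*S + (1-x)*S" using assms by (simp add: field_simps power2_eq_square)
  then have "x*(S*(y^2-1)) = (S*y-1)*(S-y)" by (simp add: algebra_simps power2_eq_square)
  then show ?thesis using d by (simp add: field_simps)
qed

lemma ratio_help:
  fixes N G Num D \<kappa> \<nu> :: real
  assumes "N*\<kappa> = \<nu>*Num" "G*\<kappa> = \<nu>*D" "\<kappa> \<noteq> 0" "\<nu> \<noteq> 0"
  shows "N / G = 1 / D * Num"
proof -
  have N: "N = \<nu>*Num/\<kappa>" and G: "G = \<nu>*D/\<kappa>" using assms by (simp_all add: eq_divide_eq)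
  show ?thesis
  proof (cases "D = 0")
    case True then show ?thesis using G by simp
  next
    case False then show ?thesis unfolding N G using assms by (simp add: field_simps)
  qed
qed

lemma Gk_rec: "Gk x y a b (n+4) = (1 - x + y^2 * (1 + x)) * Gk x y a b (n+2) - y^2 * Gk x y a b n"
proof -
  have e: "n + 4 = Suc (Suc (Suc (Suc n)))" "n+2 = Suc (Suc n)" by simp_all
  show ?thesis unfolding e by simp
qed

lemma NN_rec: "NN x y a b (n+4) = (1 - x + y^2 * (1 + x)) * NN x y a b (n+2) - y^2 * NN x y a b n"
proof -
  have e: "n + 4 = Suc (Suc (Suc (Suc n)))" "n+2 = Suc (Suc n)" by simp_all
  show ?thesis unfolding e by simp
qed

context
  fixes x y a b S :: real
  assumes S0: "S \<noteq> 0" and y0: "y \<noteq> 0" and y1: "y^2 \<noteq> 1" and S1: "S \<noteq> 1"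
  and hx: "x*(S*(y^2-1)) = (S*y-1)*(S-y)"
begin

lemma d1: "y^2 - 1 \<noteq> 0" "S - 1 \<noteq> 0" using y1 S1 by auto

lemma bG0: "Gk x y a b 0 * (1-y^2) = Ppol y a b (1/S) + Ppol y a b S"
  unfolding Ppol_def using S0 y0 by (simp add: field_simps, (insert hx, algebra)?)

lemma bG1: "Gk x y a b 2 * (1-y^2) * S = y*(Ppol y a b (1/S)*S^2 + Ppol y a b S)"
  unfolding Ppol_def using S0 y0 by (simp add: numeral_2_eq_2 field_simps, (insert hx, algebra)?)


lemma bG2: "Gk x y a b 1 * (1+S)*(1-y) = S*Ppol y a b (1/S) + Ppol y a b S"
  unfolding Ppol_def using S0 y0 by (simp add: field_simps)

lemma bG3: "Gk x y a b 3 * (1+S)*(1-y) * S = y*(S*Ppol y a b (1/S)*S^2 + Ppol y a b S)"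
  unfolding Ppol_def using S0 y0 by (simp add: numeral_3_eq_3 field_simps, (insert hx, algebra)?)

lemma bN0: "NN x y a b 1 * (1-y^2) = (Qpol y b (1/S) + (1-y^2)/(S-1)) + (Qpol y b S - (1-y^2)*S/(S-1))"
  (is "_ = ?rhs")
proof -
  have h: "NN x y a b 1 * (1-y^2) * (S-1) = Qpol y b (1/S)*(S-1) + (1-y^2) + (Qpol y b S*(S-1) - (1-y^2)*S)"
    unfolding Qpol_def using S0 y0 by (simp add: field_simps, (insert hx, algebra)?)
  then have "NN x y a b 1 * (1-y^2) = (Qpol y b (1/S)*(S-1) + (1-y^2) + (Qpol y b S*(S-1) - (1-y^2)*S))/(S-1)" using d1 by (simp add: eq_divide_eq)
  also have "\<dots> = ?rhs" using d1 by (simp add: divide_simps, (simp add: algebra_simps)?)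
  finally show ?thesis .
qed

lemma bN1: "NN x y a b 3 * (1-y^2) * S = y*((Qpol y b (1/S) + (1-y^2)/(S-1))*S^2 + (Qpol y b S - (1-y^2)*S/(S-1)))"
  (is "_ = ?rhs")
proof -
  have h: "NN x y a b 3 * (1-y^2) * S * (S-1) = y*((Qpol y b (1/S)*(S-1) + (1-y^2))*S^2 + (Qpol y b S*(S-1) - (1-y^2)*S))"
    unfolding Qpol_def using S0 y0 by (simp add: numeral_3_eq_3 field_simps, (insert hx, algebra)?)
  then have "NN x y a b 3 * (1-y^2) * S = (y*((Qpol y b (1/S)*(S-1) + (1-y^2))*S^2 + (Qpol y b S*(S-1) - (1-y^2)*S)))/(S-1)" using d1 by (simp add: eq_divide_eq)
  also have "\<dots> = ?rhs" using d1 by (simp add: divide_simps, (simp add: algebra_simps)?)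
  finally show ?thesis .
qed

lemma bN2: "NN x y a b 0 * (1+S)*(1-y)*y = (Qpol y b (1/S) + (1-y^2)/(S-1)) + (S*Qpol y b S - (1-y^2)*S^2/(S-1))"
  (is "_ = ?rhs")
proof -
  have h: "NN x y a b 0 * (1+S)*(1-y)*y * (S-1) = (Qpol y b (1/S)*(S-1) + (1-y^2)) + (S*Qpol y b S*(S-1) - (1-y^2)*S^2)"
    unfolding Qpol_def using S0 y0 by (simp add: field_simps, (insert hx, algebra)?)
  then have "NN x y a b 0 * (1+S)*(1-y)*y = ((Qpol y b (1/S)*(S-1) + (1-y^2)) + (S*Qpol y b S*(S-1) - (1-y^2)*S^2))/(S-1)" using d1 by (simp add: eq_divide_eq)
  also have "\<dots> = ?rhs" using d1 by (simp add: divide_simps, (simp add: algebra_simps)?)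
  finally show ?thesis .
qed

lemma bN3: "NN x y a b 2 * (1+S)*(1-y)*y * S = y*((Qpol y b (1/S) + (1-y^2)/(S-1))*S^2 + (S*Qpol y b S - (1-y^2)*S^2/(S-1)))"
  (is "_ = ?rhs")
proof -
  have h: "NN x y a b 2 * (1+S)*(1-y)*y * S * (S-1) = y*((Qpol y b (1/S)*(S-1) + (1-y^2))*S^2 + (S*Qpol y b S*(S-1) - (1-y^2)*S^2))"
    unfolding Qpol_def using S0 y0 by (simp add: numeral_2_eq_2 field_simps, (insert hx, algebra)?)
  then have "NN x y a b 2 * (1+S)*(1-y)*y * S = (y*((Qpol y b (1/S)*(S-1) + (1-y^2))*S^2 + (S*Qpol y b S*(S-1) - (1-y^2)*S^2)))/(S-1)" using d1 by (simp add: eq_divide_eq)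
  also have "\<dots> = ?rhs" using d1 by (simp add: divide_simps, (simp add: algebra_simps)?)
  finally show ?thesis .
qed


lemma m_eq: "1 - x + y^2 * (1 + x) = y*(S+1/S)"
  using hx S0 y0 d1 by (simp add: field_simps) (simp add: algebra_simps power2_eq_square)

lemma part2:
  assumes Sm: "S \<noteq> -1"
  shows "Nk x y a b k / Gk x y a b k = 1 / (Ppol y a b (1/S) * S^k + Ppol y a b S) *
     (Qpol y b (1/S) * S^k + Qpol y b S + (1-y^2)*(S^k - S)/(S-1))"
proof -
  have y1': "1 - y \<noteq> 0" "1 - y^2 \<noteq> 0" "1 + S \<noteq> 0" using y1 Sm d1 by (auto simp: power2_eq_square)
  have recG: "(Gk x y a b (2*(n+2)+r)*c) = y*(S+1/S)*(Gk x y a b (2*(n+1)+r)*c) - y^2*(Gk x y a b (2*n+r)*c)" for n r c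
    using Gk_rec[of x y a b "2*n+r"] m_eq by (simp add: algebra_simps)
  have recN: "(NN x y a b (2*(n+2)+r)*c) = y*(S+1/S)*(NN x y a b (2*(n+1)+r)*c) - y^2*(NN x y a b (2*n+r)*c)" for n r c
    using NN_rec[of x y a b "2*n+r"] m_eq by (simp add: algebra_simps)
  obtain n where kn: "k = 2*n \<or> k = 2*n+1" by (metis dvd_mult_div_cancel odd_two_times_div_two_succ)
  then show ?thesis
  proof
    assume k: "k = 2*n"
    have hG: "(Gk x y a b (2*n+0)*(1-y^2)) * S^n = y^n*(Ppol y a b (1/S)*S^(2*n) + Ppol y a b S)"
      apply (rule par_rec[where L="\<lambda>n. Gk x y a b (2*n+0)*(1-y^2)"])
      apply (rule recG)
      apply (rule S0)
      using bG0 apply (simp add: numeral_2_eq_2)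
      using bG1 apply (simp add: numeral_2_eq_2)
      done
    have hN: "(NN x y a b (2*n+1)*(1-y^2)) * S^n = y^n*((Qpol y b (1/S) + (1-y^2)/(S-1))*S^(2*n) + (Qpol y b S - (1-y^2)*S/(S-1)))"
      apply (rule par_rec[where L="\<lambda>n. NN x y a b (2*n+1)*(1-y^2)"])
      apply (rule recN)
      apply (rule S0)
      using bN0 apply (simp add: numeral_3_eq_3)
      using bN1 apply (simp add: numeral_3_eq_3)
      done
    have e: "(Qpol y b (1/S) + (1-y^2)/(S-1))*S^(2*n) + (Qpol y b S - (1-y^2)*S/(S-1))
        = Qpol y b (1/S) * S^k + Qpol y b S + (1-y^2)*(S^k - S)/(S-1)"
      unfolding k using d1 by (simp add: divide_simps, (simp add: algebra_simps)?)
    show ?thesis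
      by (rule ratio_help[where \<kappa>="(1-y^2)*S^n" and \<nu>="y^n"])
         (use hG hN e y1' S0 y0 in \<open>simp_all add: Nk_def k mult.assoc\<close>)
  next
    assume k: "k = 2*n+1"
    have hG: "(Gk x y a b (2*n+1)*((1+S)*(1-y))) * S^n = y^n*((S*Ppol y a b (1/S))*S^(2*n) + Ppol y a b S)"
      apply (rule par_rec[where L="\<lambda>n. Gk x y a b (2*n+1)*((1+S)*(1-y))"])
      apply (rule recG)
      apply (rule S0)
      using bG2 apply (simp add: numeral_3_eq_3 mult.assoc)
      using bG3 apply (simp add: numeral_3_eq_3 mult.assoc)
      done
    have hN: "(NN x y a b (2*(n+1)+0)*((1+S)*(1-y)*y)) * S^(n+1) = y^(n+1)*((Qpol y b (1/S) + (1-y^2)/(S-1))*S^(2*(n+1)) + (S*Qpol y b S - (1-y^2)*S^2/(S-1)))"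
      apply (rule par_rec[where L="\<lambda>n. NN x y a b (2*n+0)*((1+S)*(1-y)*y)"])
      apply (rule recN)
      apply (rule S0)
      using bN2 apply (simp add: numeral_2_eq_2 mult.assoc)
      using bN3 apply (simp add: numeral_2_eq_2 mult.assoc)
      done
    have e: "(Qpol y b (1/S) + (1-y^2)/(S-1))*S^(2*(n+1)) + (S*Qpol y b S - (1-y^2)*S^2/(S-1))
        = S*(Qpol y b (1/S) * S^k + Qpol y b S + (1-y^2)*(S^k - S)/(S-1))"
      unfolding k using d1 y0 by (simp add: divide_simps power_add power2_eq_square, (simp add: algebra_simps)?)
    have hN': "(NN x y a b (2*n+2)*((1+S)*(1-y))) * S^n = y^n * (Qpol y b (1/S) * S^k + Qpol y b S + (1-y^2)*(S^k - S)/(S-1))"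
    proof -
      have "(NN x y a b (2*n+2)*((1+S)*(1-y))) * S^n * (y*S) = (NN x y a b (2*(n+1)+0)*((1+S)*(1-y)*y)) * S^(n+1)"
        by (simp add: algebra_simps)
      also have "\<dots> = y^(n+1)*(S*(Qpol y b (1/S) * S^k + Qpol y b S + (1-y^2)*(S^k - S)/(S-1)))"
        using hN unfolding e .
      also have "\<dots> = y^n * (Qpol y b (1/S) * S^k + Qpol y b S + (1-y^2)*(S^k - S)/(S-1)) * (y*S)"
        by (simp add: algebra_simps)
      finally have "(NN x y a b (2*n+2)*((1+S)*(1-y))) * S^n * (y*S) = y^n * (Qpol y b (1/S) * S^k + Qpol y b S + (1-y^2)*(S^k - S)/(S-1)) * (y*S)" .
      then show ?thesis using y0 S0 by simp
    qed
    have e2: "(S*Ppol y a b (1/S))*S^(2*n) + Ppol y a b S = Ppol y a b (1/S) * S^k + Ppol y a b S"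
      unfolding k by (simp add: algebra_simps)
    show ?thesis
      by (rule ratio_help[where \<kappa>="(1+S)*(1-y)*S^n" and \<nu>="y^n"])
         (use hG hN' e2 y1' S0 y0 in \<open>simp_all add: Nk_def k mult.assoc\<close>)
  qed
qed

end


definition stS :: "step \<Rightarrow> step list \<Rightarrow> bool" where
  "stS s w \<longleftrightarrow> (\<exists>w'. w = s # w')"

lemma first_cases: "w = [] \<or> stS East w \<or> stS North w \<or> stS South w"
proof (cases w)
  case (Cons s w') then show ?thesis by (cases s) (auto simp: stS_def)
qed simp

lemma first_disj: "\<not> (stS South w \<and> stS North w) \<and> \<not> (stS South w \<and> stS East w) \<and> \<not> (stS North w \<and> stS East w)
   \<and> \<not> (w = [] \<and> stS South w) \<and> \<not> (w = [] \<and> stS North w) \<and> \<not> (w = [] \<and> stS East w)"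
  unfolding stS_def by auto

context
  fixes x y a b :: real and k :: nat
  assumes summ: "\<And>j A. wt x y a b k j summable_on A"
begin

definition "Fs j = infsum (wt x y a b k j) (wkj k j)"
definition "Es j = infsum (wt x y a b k j) {w \<in> wkj k j. stS East w}"
definition "Us j = infsum (wt x y a b k j) {w \<in> wkj k j. stS North w}"
definition "Ds j = infsum (wt x y a b k j) {w \<in> wkj k j. stS South w}"

lemma infsum_Un3:
  assumes "A \<inter> B = {}" "A \<inter> C = {}" "B \<inter> C = {}"
  shows "infsum (wt x y a b k j) (A \<union> B \<union> C) = infsum (wt x y a b k j) A + infsum (wt x y a b k j) B + infsum (wt x y a b k j) C"
  using assms by (simp add: infsum_Un_disjoint summ Int_Un_distrib2)

lemma split_wkj: "wkj k j = ({w \<in> wkj k j. w = []} \<union> {w \<in> wkj k j. stS East w}) \<union> {w \<in> wkj k j. stS North w} \<union> {w \<in> wkj k j. stS South w}"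
proof -
  have "w = [] \<or> stS East w \<or> stS North w \<or> stS South w" for w
    by (rule first_cases)
  then show ?thesis by blast
qed

lemma split3: "(\<And>w. P w \<longleftrightarrow> A w \<or> B w \<or> C w) \<Longrightarrow> {w \<in> X. P w} = {w \<in> X. A w} \<union> {w \<in> X. B w} \<union> {w \<in> X. C w}"
  by blast

lemma notS_iff: "\<not> stS South w \<longleftrightarrow> w = [] \<or> stS East w \<or> stS North w"
  using first_cases[of w] unfolding stS_def by auto

lemma notN_iff: "\<not> stS North w \<longleftrightarrow> w = [] \<or> stS East w \<or> stS South w"
  using first_cases[of w] unfolding stS_def by auto

lemma stS_eq: "stS s w \<longleftrightarrow> (w \<noteq> [] \<and> hd w = s)"
  by (cases w) (auto simp: stS_def)

lemma disjP: "(\<And>w. \<not> (P w \<and> Q w)) \<Longrightarrow> {w \<in> X. P w} \<inter> {w \<in> X. Q w} = {}"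
  by blast

lemmas dj = disjP[of "\<lambda>w. w = []" "stS East"] disjP[of "\<lambda>w. w = []" "stS North"] disjP[of "\<lambda>w. w = []" "stS South"]
  disjP[of "stS East" "stS North"] disjP[of "stS East" "stS South"] disjP[of "stS North" "stS South"]

lemma dj_all:
  "{w \<in> X. w = []} \<inter> {w \<in> X. stS East w} = {}" "{w \<in> X. w = []} \<inter> {w \<in> X. stS North w} = {}"
  "{w \<in> X. w = []} \<inter> {w \<in> X. stS South w} = {}" "{w \<in> X. stS East w} \<inter> {w \<in> X. stS North w} = {}"
  "{w \<in> X. stS East w} \<inter> {w \<in> X. stS South w} = {}" "{w \<in> X. stS North w} \<inter> {w \<in> X. stS South w} = {}"
  by (rule disjP, simp add: stS_eq)+

lemma dj_union: "({w \<in> X. w = []} \<union> {w \<in> X. stS East w}) \<inter> {w \<in> X. stS North w} = {}"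
  "({w \<in> X. w = []} \<union> {w \<in> X. stS East w}) \<inter> {w \<in> X. stS South w} = {}"
  "({w \<in> X. w = []} \<union> {w \<in> X. stS East w} \<union> {w \<in> X. stS North w}) \<inter> {w \<in> X. stS South w} = {}"
  by (simp_all only: Int_Un_distrib2 dj_all Un_empty)

lemma infsum_Un2: "A \<inter> B = {} \<Longrightarrow> infsum (wt x y a b k j) (A \<union> B) = infsum (wt x y a b k j) A + infsum (wt x y a b k j) B"
  by (rule infsum_Un_disjoint) (simp_all add: summ)

lemma infsum_nil: "0 \<le> j \<Longrightarrow> j \<le> int k \<Longrightarrow> infsum (wt x y a b k j) {w \<in> wkj k j. w = []} = 1"
proof -
  assume j: "0 \<le> j" "j \<le> int k"
  have n: "{w \<in> wkj k j. w = []} = {[]}" using j wkj_Nil by auto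
  show ?thesis unfolding n by simp
qed

lemma Fs_eq: "0 \<le> j \<Longrightarrow> j \<le> int k \<Longrightarrow> Fs j = 1 + Es j + Us j + Ds j"
proof -
  assume j: "0 \<le> j" "j \<le> int k"
  have "Fs j = infsum (wt x y a b k j) ({w \<in> wkj k j. w = []} \<union> {w \<in> wkj k j. stS East w} \<union> {w \<in> wkj k j. stS North w} \<union> {w \<in> wkj k j. stS South w})"
    unfolding Fs_def by (subst split_wkj) (rule refl)
  also have "\<dots> = 1 + Es j + Us j + Ds j"
    unfolding Es_def Us_def Ds_def
    by (simp only: infsum_Un2 dj_union dj_all infsum_nil[OF j])
  finally show ?thesis .
qed

lemma Es_eq: "Es j = (if boundary k j then a else x) * Fs j"
proof -
  have "{w \<in> wkj k j. stS East w} = Cons East ` wkj k j"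
    by (auto simp: stS_def wkj_East)
  then have "Es j = infsum (wt x y a b k j \<circ> Cons East) (wkj k j)"
    unfolding Es_def by (simp add: infsum_reindex)
  also have "\<dots> = (if boundary k j then a else x) * Fs j"
    unfolding Fs_def o_def by (simp add: infsum_cmult_right summ)
  finally show ?thesis .
qed

lemma Us_eq: "0 \<le> j \<Longrightarrow> Us j = (if boundary k (j+1) then b else y) *
    infsum (wt x y a b k (j+1)) {w \<in> wkj k (j+1). \<not> stS South w}"
proof -
  assume j: "0 \<le> j"
  have "{w \<in> wkj k j. stS North w} = Cons North ` {w \<in> wkj k (j+1). \<not> stS South w}"
    using j by (auto simp: stS_def wkj_North)
  then have "Us j = infsum (wt x y a b k j \<circ> Cons North) {w \<in> wkj k (j+1). \<not> stS South w}"
    unfolding Us_def by (simp add: infsum_reindex)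
  then show ?thesis
    unfolding o_def by (simp add: infsum_cmult_right summ)
qed

lemma Ds_eq: "j \<le> int k \<Longrightarrow> Ds j = (if boundary k (j-1) then b else y) *
    infsum (wt x y a b k (j-1)) {w \<in> wkj k (j-1). \<not> stS North w}"
proof -
  assume j: "j \<le> int k"
  have "{w \<in> wkj k j. stS South w} = Cons South ` {w \<in> wkj k (j-1). \<not> stS North w}"
    using j by (auto simp: stS_def wkj_South)
  then have "Ds j = infsum (wt x y a b k j \<circ> Cons South) {w \<in> wkj k (j-1). \<not> stS North w}"
    unfolding Ds_def by (simp add: infsum_reindex)
  then show ?thesis
    unfolding o_def by (simp add: infsum_cmult_right summ)
qed

lemma notS_eq: "0 \<le> j \<Longrightarrow> j \<le> int k \<Longrightarrow> infsum (wt x y a b k j) {w \<in> wkj k j. \<not> stS South w} = 1 + Es j + Us j"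
proof -
  assume j: "0 \<le> j" "j \<le> int k"
  have e: "{w \<in> wkj k j. \<not> stS South w} = {w \<in> wkj k j. w = []} \<union> {w \<in> wkj k j. stS East w} \<union> {w \<in> wkj k j. stS North w}"
    by (rule split3) (rule notS_iff)
  show ?thesis unfolding e Es_def Us_def
    by (simp only: infsum_Un2 dj_union dj_all infsum_nil[OF j])
qed

lemma notN_eq: "0 \<le> j \<Longrightarrow> j \<le> int k \<Longrightarrow> infsum (wt x y a b k j) {w \<in> wkj k j. \<not> stS North w} = 1 + Es j + Ds j"
proof -
  assume j: "0 \<le> j" "j \<le> int k"
  have e: "{w \<in> wkj k j. \<not> stS North w} = {w \<in> wkj k j. w = []} \<union> {w \<in> wkj k j. stS East w} \<union> {w \<in> wkj k j. stS South w}"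
    by (rule split3) (rule notN_iff)
  show ?thesis unfolding e Es_def Ds_def
    by (simp only: infsum_Un2 dj_union dj_all infsum_nil[OF j])
qed

lemma Us_top: "Us (int k) = 0"
proof -
  have e: "{w \<in> wkj k (int k). stS North w} = {}"
    using wkj_North[where j="int k" and k=k] wkj_range[where k=k and j="int k + 1"] by (force simp: stS_def)
  show ?thesis unfolding Us_def e by simp
qed

lemma Ds_bot: "Ds 0 = 0"
proof -
  have e: "{w \<in> wkj k 0. stS South w} = {}"
    using wkj_South[where j=0 and k=k] wkj_range[where k=k and j="-1"] by (force simp: stS_def)
  show ?thesis unfolding Ds_def e by simp
qed

end


definition "Gh k a b y (F::nat\<Rightarrow>real) j = (if j = 0 \<or> j = k then F j + (b-y)*(1+a*F j)/y else F j)"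

lemma sys_bottom:
  fixes F E U Dn :: "nat \<Rightarrow> real" and k :: nat
  assumes k1: "1 \<le> k" and y0: "y \<noteq> 0"
    and hF: "\<And>j. j \<le> k \<Longrightarrow> F j = 1 + E j + U j + Dn j"
    and hE: "\<And>j. j \<le> k \<Longrightarrow> E j = (if j = 0 \<or> j = k then a else x) * F j"
    and hU: "\<And>j. j < k \<Longrightarrow> U j = (if j+1 = k then b else y) * (1 + E (j+1) + U (j+1))"
    and hUk: "U k = 0"
    and hD: "\<And>j. 0 < j \<Longrightarrow> j \<le> k \<Longrightarrow> Dn j = (if j - 1 = 0 then b else y) * (1 + E (j-1) + Dn (j-1))"
    and hD0: "Dn 0 = 0"
  shows "\<And>j. j + 2 \<le> k \<Longrightarrow> y * Gh k a b y F j - (1 + y^2 - x*(1-y^2)) * Gh k a b y F (j+1) + y * Gh k a b y F (j+2) = -(1-y^2)"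
    and "y * Gh k a b y F 0 = (y + a*b - a*y) * F 0 + (b - y)"
    and "y * Gh k a b y F 1 = (1 - a + a*b*y) * F 0 - (1 - b*y)"
proof -
  fix j assume jk: "j + 2 \<le> k"
  define i where "i = j + 1"
  have i: "1 \<le> i" "i + 1 \<le> k" "j = i - 1" "j + 2 = i + 1" using jk by (auto simp: i_def)
  have Ei: "E i = x * F i" using hE[of i] i by auto
  have Gi: "Gh k a b y F i = F i" using i by (auto simp: Gh_def)
  have L: "y * Gh k a b y F (i-1) = y^2 * (1 + E i + U i) + Dn i"
  proof (cases "i = 1")
    case True
    have F0: "F 0 = 1 + E 0 + U 0" using hF[of 0] hD0 by simp
    have U0: "U 0 = y * (1 + E 1 + U 1)" using hU[of 0] i True by auto
    have D1: "Dn 1 = b * (1 + E 0)" using hD[of 1] hD0 k1 by simp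
    have "y * Gh k a b y F (i-1) = y * F 0 + (b-y)*(1 + E 0)"
      using y0 hE[of 0] True by (simp add: Gh_def field_simps)
    also have "\<dots> = b * (1 + E 0) + y * U 0" unfolding F0 by (simp add: algebra_simps)
    also have "\<dots> = y^2 * (1 + E i + U i) + Dn i" unfolding U0 D1 True by (simp add: algebra_simps power2_eq_square)
    finally show ?thesis .
  next
    case False
    have G: "Gh k a b y F (i-1) = F (i-1)" using False i by (auto simp: Gh_def)
    have "F (i-1) = 1 + E (i-1) + U (i-1) + Dn (i-1)" using hF[of "i-1"] i by simp
    moreover have "U (i-1) = y * (1 + E i + U i)" using hU[of "i-1"] i by auto
    moreover have "Dn i = y * (1 + E (i-1) + Dn (i-1))" using hD[of i] i False by auto
    ultimately show ?thesis unfolding G by (simp add: algebra_simps power2_eq_square)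
  qed
  have R: "y * Gh k a b y F (i+1) = y^2 * (1 + E i + Dn i) + U i"
  proof (cases "i + 1 = k")
    case True
    have Fk: "F (i+1) = 1 + E (i+1) + Dn (i+1)" using hF[of "i+1"] hUk True by simp
    have Dk: "Dn (i+1) = y * (1 + E i + Dn i)" using hD[of "i+1"] i True by auto
    have Ui: "U i = b * (1 + E (i+1))" using hU[of i] hUk True by simp
    have "y * Gh k a b y F (i+1) = y * F (i+1) + (b-y)*(1 + E (i+1))"
      using y0 hE[of "i+1"] True by (simp add: Gh_def field_simps)
    also have "\<dots> = b * (1 + E (i+1)) + y * Dn (i+1)" unfolding Fk by (simp add: algebra_simps)
    also have "\<dots> = y^2 * (1 + E i + Dn i) + U i" unfolding Ui Dk by (simp add: algebra_simps power2_eq_square)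
    finally show ?thesis .
  next
    case False
    have G: "Gh k a b y F (i+1) = F (i+1)" using False i by (auto simp: Gh_def)
    have F1: "F (i+1) = 1 + E (i+1) + U (i+1) + Dn (i+1)" using hF[of "i+1"] i by simp
    have Ui: "U i = y * (1 + E (i+1) + U (i+1))" using hU[of i] i False by auto
    have D1: "Dn (i+1) = y * (1 + E i + Dn i)" using hD[of "i+1"] i by auto
    have "y * F (i+1) = y * (1 + E (i+1) + U (i+1)) + y * Dn (i+1)" unfolding F1 by (simp add: algebra_simps)
    also have "\<dots> = y^2 * (1 + E i + Dn i) + U i" unfolding Ui D1 by (simp add: algebra_simps power2_eq_square)
    finally show ?thesis unfolding G .
  qed
  have Fi: "F i = 1 + E i + U i + Dn i" using hF[of i] i by simp
  show "y * Gh k a b y F j - (1 + y^2 - x*(1-y^2)) * Gh k a b y F (j+1) + y * Gh k a b y F (j+2) = -(1-y^2)"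
  proof -
    have s: "y * Gh k a b y F (i-1) + y * Gh k a b y F (i+1) = y^2*(1 + E i + F i) + F i - 1 - E i"
      unfolding L R Fi by (simp add: algebra_simps)
    have "y * Gh k a b y F j - (1 + y^2 - x*(1-y^2)) * Gh k a b y F (j+1) + y * Gh k a b y F (j+2)
        = (y * Gh k a b y F (i-1) + y * Gh k a b y F (i+1)) - (1 + y^2 - x*(1-y^2)) * F i"
      using i Gi by simp
    also have "\<dots> = -(1-y^2)" unfolding s Ei by (simp add: algebra_simps)
    finally show ?thesis .
  qed
next
  show "y * Gh k a b y F 0 = (y + a*b - a*y) * F 0 + (b - y)"
    using y0 by (simp add: Gh_def field_simps)
next
  have E0: "E 0 = a * F 0" using hE[of 0] by simp
  have F0: "F 0 = 1 + E 0 + U 0" using hF[of 0] hD0 by simp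
  have D1: "Dn 1 = b * (1 + E 0)" using hD[of 1] hD0 k1 by simp
  show "y * Gh k a b y F 1 = (1 - a + a*b*y) * F 0 - (1 - b*y)"
  proof (cases "k = 1")
    case True
    have E1: "E 1 = a * F 1" using hE[of 1] True by simp
    have F1: "F 1 = 1 + E 1 + Dn 1" using hF[of 1] hUk True by simp
    have U0: "U 0 = b * (1 + E 1)" using hU[of 0] hUk True by simp
    have "y * Gh k a b y F 1 = y * F 1 + (b-y)*(1 + E 1)"
      using y0 E1 True by (simp add: Gh_def field_simps)
    also have "\<dots> = b*(1 + E 1) + y*b*(1 + E 0)" unfolding F1 D1 by (simp add: algebra_simps)
    also have "\<dots> = U 0 + b*y*(1 + E 0)" unfolding U0 by (simp add: algebra_simps)
    also have "\<dots> = F 0 - (1 + E 0) + b*y*(1 + E 0)" using F0 by simp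
    also have "\<dots> = (1 - a + a*b*y) * F 0 - (1 - b*y)" unfolding E0 by (simp add: algebra_simps)
    finally show ?thesis .
  next
    case False
    have G1: "Gh k a b y F 1 = F 1" using False by (simp add: Gh_def)
    have F1: "F 1 = 1 + E 1 + U 1 + Dn 1" using hF[of 1] k1 by simp
    have U0: "U 0 = y * (1 + E 1 + U 1)" using hU[of 0] False k1 by simp
    have "y * F 1 = y*(1 + E 1 + U 1) + y * Dn 1" unfolding F1 by (simp add: algebra_simps)
    also have "\<dots> = U 0 + b*y*(1 + E 0)" unfolding U0 D1 by (simp add: algebra_simps)
    also have "\<dots> = F 0 - (1 + E 0) + b*y*(1 + E 0)" using F0 by simp
    also have "\<dots> = (1 - a + a*b*y) * F 0 - (1 - b*y)" unfolding E0 by (simp add: algebra_simps)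
    finally show ?thesis unfolding G1 .
  qed
qed


lemma sys_solution:
  fixes F E U Dn :: "nat \<Rightarrow> real" and k :: nat and S x y a b :: real
  assumes k1: "1 \<le> k" and y0: "y \<noteq> 0"
    and hF: "\<And>j. j \<le> k \<Longrightarrow> F j = 1 + E j + U j + Dn j"
    and hE: "\<And>j. j \<le> k \<Longrightarrow> E j = (if j = 0 \<or> j = k then a else x) * F j"
    and hU: "\<And>j. j < k \<Longrightarrow> U j = (if j+1 = k then b else y) * (1 + E (j+1) + U (j+1))"
    and hUk: "U k = 0"
    and hD: "\<And>j. 0 < j \<Longrightarrow> j \<le> k \<Longrightarrow> Dn j = (if j - 1 = 0 then b else y) * (1 + E (j-1) + Dn (j-1))"
    and hD0: "Dn 0 = 0"
    and S0: "S \<noteq> 0" and S1: "S^2 \<noteq> 1"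
    and Seq: "y*(S+1/S) = 1 + y^2 - x*(1-y^2)"
    and a2: "1 - a + a*b*y \<noteq> 0"
    and pq1: "Ppol y a b S - Ppol y a b (1/S) * S^k \<noteq> 0"
    and pq2: "Ppol y a b S + Ppol y a b (1/S) * S^k \<noteq> 0"
  shows "F 0 = 1 / (Ppol y a b (1/S) * S^k + Ppol y a b S) *
     (Qpol y b (1/S) * S^k + Qpol y b S + (1-y^2)*(S^k - S)/(S-1))"
proof -
  define G where "G = Gh k a b y F"
  note B = sys_bottom[OF k1 y0 hF hE hU hUk hD hD0]
  define F' where "F' j = F (k - j)" for j
  define E' where "E' j = E (k - j)" for j
  define U' where "U' j = Dn (k - j)" for j
  define D' where "D' j = U (k - j)" for j
  have hF': "F' j = 1 + E' j + U' j + D' j" if "j \<le> k" for j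
    using hF[of "k-j"] unfolding F'_def E'_def U'_def D'_def by simp
  have hE': "E' j = (if j = 0 \<or> j = k then a else x) * F' j" if "j \<le> k" for j
  proof -
    have "(k - j = 0 \<or> k - j = k) \<longleftrightarrow> (j = 0 \<or> j = k)" using that by auto
    then show ?thesis using hE[of "k-j"] unfolding F'_def E'_def by simp
  qed
  have hU': "U' j = (if j+1 = k then b else y) * (1 + E' (j+1) + U' (j+1))" if "j < k" for j
  proof -
    have e: "k - j - 1 = k - (j+1)" and c: "(k - j - 1 = 0) \<longleftrightarrow> (j+1 = k)" using that by auto
    show ?thesis using hD[of "k-j"] that unfolding U'_def E'_def e c by simp
  qed
  have hUk': "U' k = 0" using hD0 by (simp add: U'_def)
  have hD': "D' j = (if j - 1 = 0 then b else y) * (1 + E' (j-1) + D' (j-1))" if "0 < j" "j \<le> k" for j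
  proof -
    have e: "k - j + 1 = k - (j-1)" and c: "(k - j + 1 = k) \<longleftrightarrow> (j - 1 = 0)" using that by auto
    show ?thesis using hU[of "k-j"] that unfolding D'_def E'_def e[symmetric] c by simp
  qed
  have hD0': "D' 0 = 0" using hUk by (simp add: D'_def)
  note B' = sys_bottom[OF k1 y0 hF' hE' hU' hUk' hD' hD0']
  have GG: "Gh k a b y F' j = G (k - j)" if "j \<le> k" for j
  proof -
    have "(k - j = 0 \<or> k - j = k) \<longleftrightarrow> (j = 0 \<or> j = k)" using that by auto
    then show ?thesis unfolding Gh_def G_def F'_def by simp
  qed
  define c where "c = S*(1-y^2)/(y*(S-1)^2)"
  have Sm1: "S - 1 \<noteq> 0" using S1 by auto
  have cdef: "c*((1 + y^2 - x*(1-y^2)) - 2*y) = 1 - y^2"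
  proof -
    have "(1 + y^2 - x*(1-y^2)) - 2*y = y*(S+1/S) - 2*y" using Seq by simp
    also have "\<dots> = y*(S-1)^2/S" using S0 by (simp add: field_simps power2_eq_square)
    finally have h: "(1 + y^2 - x*(1-y^2)) - 2*y = y*(S-1)^2/S" .
    have s2: "(S-1)^2 \<noteq> 0" using Sm1 by simp
    show ?thesis unfolding h c_def using S0 y0 s2 by (simp add: field_simps)
  qed
  obtain A B0 where AB: "\<forall>j\<le>k. G j = c + A*S^j + B0/S^j"
    using rec_closed[where G=G and S=S and y=y and c=c and \<mu>="1 + y^2 - x*(1-y^2)" and k=k,
       OF S0 S1 Seq[symmetric] cdef _ y0] B(1) unfolding G_def by blast
  define T where "T = S^k"
  have T0: "T \<noteq> 0" using S0 by (simp add: T_def)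
  have Sk1: "S^(k-1) = T/S" 
  proof -
    obtain m where m: "k = Suc m" using k1 by (cases k) auto
    show ?thesis unfolding T_def m using S0 by simp
  qed
  have e1: "y*(c + A + B0) = (y + a*b - a*y)*F 0 + (b-y)" using AB B(2) unfolding G_def by simp
  have e2: "y*(c + A*S + B0/S) = (1 - a + a*b*y)*F 0 - (1-b*y)" using AB[rule_format, of 1] B(3) k1 unfolding G_def by simp
  have F'0: "F' 0 = F k" by (simp add: F'_def)
  have e3: "y*(c + A*T + B0/T) = (y + a*b - a*y)*F k + (b-y)"
  proof -
    have "Gh k a b y F' 0 = c + A*T + B0/T" using GG[of 0] AB unfolding T_def G_def by simp
    then show ?thesis using B'(2) F'0 by simp
  qed
  have e4: "y*(c + A*T/S + B0*S/T) = (1 - a + a*b*y)*F k - (1-b*y)"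
  proof -
    have "Gh k a b y F' 1 = c + A*(T/S) + B0/(T/S)" using GG[of 1] k1 AB Sk1 unfolding G_def by simp
    also have "\<dots> = c + A*T/S + B0*S/T" by simp
    finally have "Gh k a b y F' 1 = c + A*T/S + B0*S/T" .
    then show ?thesis using B'(3) F'0 by simp
  qed
  have pq1': "(1 - a + a*b*y) - (y + a*b - a*y)*S - ((1 - a + a*b*y) - (y + a*b - a*y)/S)*T \<noteq> 0"
  proof -
    have "Ppol y a b S = (1 - a + a*b*y) - (y + a*b - a*y)*S" "Ppol y a b (1/S) = (1 - a + a*b*y) - (y + a*b - a*y)/S"
      by (simp_all add: Ppol_def algebra_simps add_divide_distrib diff_divide_distrib)
    then show ?thesis using pq1 unfolding T_def by simp
  qed
  note sol = solve_sys[OF e1 e2 e3 e4 S0 T0 a2 pq1']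
  have PP: "Ppol y a b (1/S) * S^k + Ppol y a b S = ((1 - a + a*b*y) - (y + a*b - a*y)*S) + ((1 - a + a*b*y) - (y + a*b - a*y)/S)*T"
    unfolding T_def by (simp add: Ppol_def algebra_simps add_divide_distrib diff_divide_distrib)
  have S1': "S \<noteq> 1" using Sm1 by simp
  note fin = final_identity[OF S0 y0 S1', where T=T and a=a and b=b]
  have X0: "(1 - a + a*b*y) * F 0 * (((1 - a + a*b*y) - (y + a*b - a*y)*S) + ((1 - a + a*b*y) - (y + a*b - a*y)/S)*T)
     = (1 - a + a*b*y) * ((1 - b*y + (b - y) * (1/S)) * T + (1 - b*y + (b - y) * S) + (1 - y^2) * (T - S) / (S - 1))"
    using trans[OF sol[unfolded c_def] fin[symmetric]] .
  have X: "(1 - a + a*b*y) * (F 0 * (Ppol y a b (1/S) * S^k + Ppol y a b S)) = (1 - a + a*b*y) * (Qpol y b (1/S) * S^k + Qpol y b S + (1-y^2)*(S^k - S)/(S-1))"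
    using X0 unfolding PP Qpol_def T_def by (simp only: mult.assoc)
  then have "F 0 * (Ppol y a b (1/S) * S^k + Ppol y a b S) = Qpol y b (1/S) * S^k + Qpol y b S + (1-y^2)*(S^k - S)/(S-1)"
    using a2 by simp
  then show ?thesis using pq2 by (simp add: field_simps)
qed


lemma R_big:
  fixes x y :: real
  assumes x: "\<bar>x\<bar> < 1/100" and y: "\<bar>y\<bar> < 1/100" "y \<noteq> 0"
  shows "98 \<le> \<bar>(1+x)*y + (1-x)/y\<bar>"
proof -
  have ay: "0 < \<bar>y\<bar>" using y by simp
  have "\<bar>(1-x)/y\<bar> = (1-x)/\<bar>y\<bar>" using x by (simp add: abs_divide)
  moreover have "99 \<le> (1-x)/\<bar>y\<bar>"
  proof -
    have "99 * \<bar>y\<bar> \<le> 1 - x" using x y by linarith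
    then show ?thesis using ay by (simp add: pos_le_divide_eq)
  qed
  moreover have "\<bar>(1+x)*y\<bar> \<le> 1"
  proof -
    have "\<bar>(1+x)*y\<bar> = \<bar>1+x\<bar>*\<bar>y\<bar>" by (simp add: abs_mult)
    also have "\<dots> \<le> 2 * (1/100)" by (rule mult_mono) (use x y in auto)
    finally show ?thesis by simp
  qed
  ultimately show ?thesis by linarith
qed

lemma S_props:
  fixes x y S :: real
  assumes x: "\<bar>x\<bar> < 1/100" and y: "\<bar>y\<bar> < 1/100" "y \<noteq> 0"
    and S: "\<bar>S\<bar> < 1" "S + 1/S = (1+x)*y + (1-x)/y"
  shows "S \<noteq> 0" "\<bar>S\<bar> \<le> 1/50" "x*(S*(y^2-1)) = (S*y-1)*(S-y)" "y*(S+1/S) = 1 + y^2 - x*(1-y^2)"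
proof -
  define R where "R = (1+x)*y + (1-x)/y"
  have R: "98 \<le> \<bar>R\<bar>" unfolding R_def by (rule R_big[OF x y])
  show S0: "S \<noteq> 0"
  proof
    assume "S = 0" then have "R = 0" using S(2) by (simp add: R_def)
    then show False using R by simp
  qed
  have "S * (R - S) = 1" using S(2) S0 unfolding R_def[symmetric] by (simp add: field_simps)
  then have e: "\<bar>S\<bar> * \<bar>R - S\<bar> = 1" by (metis abs_mult abs_one)
  have "97 \<le> \<bar>R - S\<bar>" using R S(1) by linarith
  then have "\<bar>S\<bar> * 97 \<le> \<bar>S\<bar> * \<bar>R - S\<bar>" by (simp add: mult_left_mono)
  then have "\<bar>S\<bar> * 97 \<le> 1" using e by simp
  then show "\<bar>S\<bar> \<le> 1/50" by linarith
  have h1: "S^2 + 1 = S*R" using S(2) S0 unfolding R_def[symmetric] by (simp add: field_simps power2_eq_square)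
  have h2: "y*(S^2 + 1) = S*((1+x)*y^2 + (1-x))" unfolding h1 R_def using y(2) by (simp add: field_simps power2_eq_square)
  have "x*(S*(y^2-1)) - (S*y-1)*(S-y) = S*((1+x)*y^2 + (1-x)) - y*(S^2+1)" by (simp add: algebra_simps power2_eq_square)
  then show "x*(S*(y^2-1)) = (S*y-1)*(S-y)" using h2 by simp
  show "y*(S+1/S) = 1 + y^2 - x*(1-y^2)" using S(2) y(2) by (simp add: field_simps power2_eq_square)
qed

lemma S_exists_pos:
  fixes R :: real assumes "2 < R"
  shows "\<exists>S. \<bar>S\<bar> < 1 \<and> S + 1/S = R"
proof -
  define s where "s = sqrt (R^2 - 4)"
  have R4: "2^2 \<le> R^2" using assms by (intro power_mono) auto
  have s0: "0 \<le> s" using R4 by (simp add: s_def)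
  have s2: "s^2 = R^2 - 4" using R4 unfolding s_def by simp
  have sR: "s < R"
  proof -
    have "s^2 < R^2" using s2 by simp
    then show ?thesis using assms by (intro power_less_imp_less_base[of s 2 R]) auto
  qed
  have sR2: "R - 2 < s"
  proof -
    have "(R-2)^2 < s^2" using s2 assms by (simp add: power2_eq_square algebra_simps)
    then show ?thesis using s0 by (intro power_less_imp_less_base[of "R-2" 2 s]) auto
  qed
  define S where "S = (R - s)/2"
  have Sp: "0 < S" "S < 1" using sR sR2 by (auto simp: S_def)
  have "S * ((R + s)/2) = 1" unfolding S_def using s2 by (simp add: field_simps power2_eq_square)
  then have "1/S = (R+s)/2" using Sp by (simp add: field_simps)
  then have "S + 1/S = R" by (simp add: S_def field_simps)
  then show ?thesis using Sp by (intro exI[of _ S]) auto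
qed

lemma S_exists:
  fixes R :: real assumes "2 < \<bar>R\<bar>"
  shows "\<exists>S. \<bar>S\<bar> < 1 \<and> S + 1/S = R"
proof (cases "0 < R")
  case True then show ?thesis using S_exists_pos assms by simp
next
  case False
  then obtain S where "\<bar>S\<bar> < 1" "S + 1/S = -R" using S_exists_pos[of "-R"] assms by auto
  then show ?thesis by (intro exI[of _ "-S"]) (auto simp: field_simps)
qed


lemma abs_mul_le:
  fixes u v p q :: real
  assumes "\<bar>u\<bar> \<le> p" "\<bar>v\<bar> \<le> q"
  shows "abs (u * v) \<le> p*q"
  using assms by (simp add: abs_mult mult_mono')

lemma pq_bounds:
  fixes a b y S :: real and k :: nat
  assumes a: "\<bar>a\<bar> < 1/100" and b: "\<bar>b\<bar> < 1/100" and y: "\<bar>y\<bar> < 1/100"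
    and S: "\<bar>S\<bar> \<le> 1/50" "S \<noteq> 0" and k: "1 \<le> k"
  shows "1 - a + a*b*y \<noteq> 0" "Ppol y a b S - Ppol y a b (1/S) * S^k \<noteq> 0" "Ppol y a b S + Ppol y a b (1/S) * S^k \<noteq> 0"
proof -
  have ab: "\<bar>a*b\<bar> \<le> 1/100" using abs_mul_le[of a "1/100" b 1] a b by simp
  have ay: "\<bar>a*y\<bar> \<le> 1/100" using abs_mul_le[of a "1/100" y 1] a y by simp
  have aby: "\<bar>a*b*y\<bar> \<le> 1/100" using abs_mul_le[of "a*b" "1/100" y 1] ab y by simp
  define a1 where "a1 = a*b + y - a*y"
  define a2 where "a2 = 1 - a + a*b*y"
  have a1b: "\<bar>a1\<bar> \<le> 3/100" unfolding a1_def using ab ay y by (simp only: abs_le_iff abs_less_iff, linarith)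
  have a2b: "98/100 \<le> a2" "\<bar>a2\<bar> \<le> 102/100" unfolding a2_def using a aby by (auto simp: abs_le_iff abs_less_iff)
  show "1 - a + a*b*y \<noteq> 0" using a2b unfolding a2_def by simp
  obtain m where m: "k = Suc m" using k by (cases k) auto
  have Sm: "\<bar>S^m\<bar> \<le> 1" using S by (simp add: power_abs power_le_one)
  have Sk: "\<bar>S^k\<bar> \<le> 1/50" unfolding m using abs_mul_le[OF S(1) Sm] by simp
  have P1: "Ppol y a b S = a2 - S*a1" unfolding Ppol_def a1_def a2_def by (simp add: algebra_simps)
  have P2: "Ppol y a b (1/S) * S^k = a2*S^k - S^m*a1" unfolding Ppol_def a1_def a2_def m using S(2)
    by (simp add: field_simps)
  have t1: "\<bar>S*a1\<bar> \<le> 1/50 * (3/100)" by (rule abs_mul_le[OF S(1) a1b])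
  have t2: "\<bar>a2*S^k\<bar> \<le> 102/100 * (1/50)" by (rule abs_mul_le[OF a2b(2) Sk])
  have t3: "\<bar>S^m*a1\<bar> \<le> 1 * (3/100)" by (rule abs_mul_le[OF Sm a1b])
  show "Ppol y a b S - Ppol y a b (1/S) * S^k \<noteq> 0" "Ppol y a b S + Ppol y a b (1/S) * S^k \<noteq> 0"
    unfolding P1 P2 using t1 t2 t3 a2b by (auto simp: abs_le_iff)
qed


lemma walk_F0:
  fixes x y a b S :: real and k :: nat
  assumes summ: "\<And>j A. wt x y a b k j summable_on A"
    and k1: "1 \<le> k" and y0: "y \<noteq> 0"
    and S0: "S \<noteq> 0" and S1: "S^2 \<noteq> 1"
    and Seq: "y*(S+1/S) = 1 + y^2 - x*(1-y^2)"
    and a2: "1 - a + a*b*y \<noteq> 0"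
    and pq1: "Ppol y a b S - Ppol y a b (1/S) * S^k \<noteq> 0"
    and pq2: "Ppol y a b S + Ppol y a b (1/S) * S^k \<noteq> 0"
  shows "Fs x y a b k 0 = 1 / (Ppol y a b (1/S) * S^k + Ppol y a b S) *
     (Qpol y b (1/S) * S^k + Qpol y b S + (1-y^2)*(S^k - S)/(S-1))"
proof -
  define F where "F j = Fs x y a b k (int j)" for j
  define E where "E j = Es x y a b k (int j)" for j
  define U where "U j = Us x y a b k (int j)" for j
  define D where "D j = Ds x y a b k (int j)" for j
  have bd: "boundary k (int j) \<longleftrightarrow> j = 0 \<or> j = k" for j by (auto simp: boundary_def)
  have hF: "F j = 1 + E j + U j + D j" if "j \<le> k" for j
    unfolding F_def E_def U_def D_def by (rule Fs_eq[OF summ]) (use that in auto)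
  have hE: "E j = (if j = 0 \<or> j = k then a else x) * F j" if "j \<le> k" for j
    unfolding F_def E_def using Es_eq[OF summ, of "int j"] bd by simp
  have hU: "U j = (if j+1 = k then b else y) * (1 + E (j+1) + U (j+1))" if "j < k" for j
  proof -
    have b1: "boundary k (int j + 1) \<longleftrightarrow> j + 1 = k" by (auto simp: boundary_def)
    have "U j = (if boundary k (int j+1) then b else y) * infsum (wt x y a b k (int j+1)) {w \<in> wkj k (int j+1). \<not> stS South w}"
      unfolding U_def by (rule Us_eq[OF summ]) simp
    also have "infsum (wt x y a b k (int j+1)) {w \<in> wkj k (int j+1). \<not> stS South w} = 1 + E (j+1) + U (j+1)"
    proof -
      have ij: "int (j+1) = int j + 1" by simp
      show ?thesis unfolding E_def U_def ij using notS_eq[OF summ, of "int j + 1"] that by simp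
    qed
    finally show ?thesis using b1 by simp
  qed
  have hUk: "U k = 0" unfolding U_def by (rule Us_top[OF summ])
  have hD: "D j = (if j - 1 = 0 then b else y) * (1 + E (j-1) + D (j-1))" if "0 < j" "j \<le> k" for j
  proof -
    have b1: "boundary k (int j - 1) \<longleftrightarrow> j - 1 = 0" using that by (auto simp: boundary_def)
    have ij: "int (j - 1) = int j - 1" using that by simp
    have "D j = (if boundary k (int j - 1) then b else y) * infsum (wt x y a b k (int j - 1)) {w \<in> wkj k (int j - 1). \<not> stS North w}"
      unfolding D_def by (rule Ds_eq[OF summ]) (use that in simp)
    also have "infsum (wt x y a b k (int j - 1)) {w \<in> wkj k (int j - 1). \<not> stS North w} = 1 + E (j-1) + D (j-1)"
      unfolding E_def D_def ij using notN_eq[OF summ, of "int j - 1"] that by simp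
    finally show ?thesis using b1 by simp
  qed
  have hD0: "D 0 = 0" unfolding D_def using Ds_bot[OF summ] by simp
  have "F 0 = 1 / (Ppol y a b (1/S) * S^k + Ppol y a b S) *
     (Qpol y b (1/S) * S^k + Qpol y b S + (1-y^2)*(S^k - S)/(S-1))"
    by (rule sys_solution[OF k1 y0 hF hE hU hUk hD hD0 S0 S1 Seq a2 pq1 pq2])
  then show ?thesis by (simp add: F_def)
qed

theorem proposition2p4:
  fixes k :: nat
  assumes "k \<ge> 1"
  shows "\<exists>\<epsilon>>0. \<forall>x y a b :: real.
           \<bar>x\<bar> < \<epsilon> \<and> \<bar>y\<bar> < \<epsilon> \<and> y \<noteq> 0 \<and> \<bar>a\<bar> < \<epsilon> \<and> \<bar>b\<bar> < \<epsilon> \<longrightarrow>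
             ((\<lambda>w. x ^ hstat k w * y ^ vstat k w * a ^ hcstat k w * b ^ vcstat k w)
                 has_sum (Nk x y a b k / Gk x y a b k)) (walks k)
           \<and> (\<forall>S. \<bar>S\<bar> < 1 \<and> S + 1 / S = (1 + x) * y + (1 - x) / y \<longrightarrow>
                 Nk x y a b k / Gk x y a b k =
                   1 / (Ppol y a b (1 / S) * S ^ k + Ppol y a b S) *
                   (Qpol y b (1 / S) * S ^ k + Qpol y b S + (1 - y^2) * (S ^ k - S) / (S - 1)))"
proof (rule exI[of _ "1/100"], rule conjI, simp, intro allI impI)
  fix x y a b :: real
  assume H: "\<bar>x\<bar> < 1/100 \<and> \<bar>y\<bar> < 1/100 \<and> y \<noteq> 0 \<and> \<bar>a\<bar> < 1/100 \<and> \<bar>b\<bar> < 1/100"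
  then have x: "\<bar>x\<bar> < 1/100" and y: "\<bar>y\<bar> < 1/100" "y \<noteq> 0" and a: "\<bar>a\<bar> < 1/100" and b: "\<bar>b\<bar> < 1/100"
    by auto
  have y1: "y^2 \<noteq> 1"
  proof
    assume "y^2 = 1" then have "\<bar>y\<bar> = 1" by (metis abs_power2 power2_eq_1_iff abs_1 abs_minus_cancel)
    then show False using y by simp
  qed
  have key: "Nk x y a b k / Gk x y a b k = 1 / (Ppol y a b (1 / S) * S ^ k + Ppol y a b S) *
                   (Qpol y b (1 / S) * S ^ k + Qpol y b S + (1 - y^2) * (S ^ k - S) / (S - 1))"
    if S: "\<bar>S\<bar> < 1" "S + 1 / S = (1 + x) * y + (1 - x) / y" for S
  proof -
    note SP = S_props[OF x y S]
    have S1: "S \<noteq> 1" "S \<noteq> -1" using SP(2) by auto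
    show ?thesis by (rule part2[OF SP(1) y(2) y1 S1(1) SP(3) S1(2)])
  qed
  then have P2: "\<forall>S. \<bar>S\<bar> < 1 \<and> S + 1 / S = (1 + x) * y + (1 - x) / y \<longrightarrow>
                 Nk x y a b k / Gk x y a b k =
                   1 / (Ppol y a b (1 / S) * S ^ k + Ppol y a b S) *
                   (Qpol y b (1 / S) * S ^ k + Qpol y b S + (1 - y^2) * (S ^ k - S) / (S - 1))"
    by blast
  have summ: "\<And>j A. wt x y a b k j summable_on A"
    by (rule wt_abs_summable[where e="1/100"]) (use x y a b in auto)
  obtain S where S: "\<bar>S\<bar> < 1" "S + 1 / S = (1 + x) * y + (1 - x) / y"
    using S_exists[of "(1 + x) * y + (1 - x) / y"] R_big[OF x y] by auto
  note SP = S_props[OF x y S]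
  have S2: "S^2 \<noteq> 1"
  proof
    assume "S^2 = 1" then have "\<bar>S\<bar> = 1" by (metis abs_power2 power2_eq_1_iff abs_1 abs_minus_cancel)
    then show False using S by simp
  qed
  note PQ = pq_bounds[OF a b y(1) SP(2) SP(1) assms]
  have F0: "Fs x y a b k 0 = Nk x y a b k / Gk x y a b k"
    using walk_F0[OF summ assms y(2) SP(1) S2 SP(4) PQ] key[OF S] by simp
  have w: "(\<lambda>w. x ^ hstat k w * y ^ vstat k w * a ^ hcstat k w * b ^ vcstat k w) = wt x y a b k 0"
    by (rule ext) (rule weight_wt)
  have P1: "((\<lambda>w. x ^ hstat k w * y ^ vstat k w * a ^ hcstat k w * b ^ vcstat k w)
                 has_sum (Nk x y a b k / Gk x y a b k)) (walks k)"
    unfolding w walks_wkj F0[symmetric] by (unfold Fs_def[OF summ]) (rule has_sum_infsum[OF summ])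
  show "((\<lambda>w. x ^ hstat k w * y ^ vstat k w * a ^ hcstat k w * b ^ vcstat k w)
                 has_sum (Nk x y a b k / Gk x y a b k)) (walks k)
           \<and> (\<forall>S. \<bar>S\<bar> < 1 \<and> S + 1 / S = (1 + x) * y + (1 - x) / y \<longrightarrow>
                 Nk x y a b k / Gk x y a b k =
                   1 / (Ppol y a b (1 / S) * S ^ k + Ppol y a b S) *
                   (Qpol y b (1 / S) * S ^ k + Qpol y b S + (1 - y^2) * (S ^ k - S) / (S - 1)))"
    using P1 P2 by blast
qed


end
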